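(* Let $q\in(0,1]$. Then $\mathrm{F\o l}^{\mathrm{inn}}(R(SU_q(2)))=1-q^2$ and $\mathrm{F\o l}(R(SU_q(2)))=q^{-2}-q^2$.
   Context: $R(SU_q(2))$ is the fusion algebra with irreducible objects $I=\mathbb{Z}_+=\{0,1,2,\dots\}$, unit $0$, trivial involution $\bar n=n$, product $m\cdot n=\sum_{k\in\{|m-n|,|m-n|+2,\dots,m+n\}}k$, and dimension function $d(n)=[n+1]_q$, where $[x]_q=\frac{q^{-x}-q^x}{q^{-1}-q}$ for $0<q<1$ and $[x]_1=x$. Write $\beta\subseteq r$ if $\beta$ has nonzero coefficient in $r$; $\mathrm{supp}(r)$ is the set of such $\beta$. For $A\subseteq I$, $|A|=\sum_{\beta\in A}d(\beta)^2$ and $A^c=I\setminus A$. A finite generating set is a finite $X\subseteq I$ (closed under the involution) such that every element of $I$ is contained in some product of elements of $X$. For finite $X,A\subseteq I$: $\partial_X(A)=\{\beta\in A:\exists x\in X,\ \mathrm{supp}(\beta x)\not\subseteq A\}\cup\{\beta\in A^c:\exists x\in X,\ \mathrm{supp}(\beta x)\not\subseteq A^c\}$ and $\partial^{\mathrm{inn}}_X(A)=\{\beta\in A:\exists x\in X,\ \mathrm{supp}(\beta x)\not\subseteq A\}$. Then $\mathrm{F\o l}_X=\inf_A|\partial_X A|/|A|$ and $\mathrm{F\o l}^{\mathrm{inn}}_X=\inf_A|\partial^{\mathrm{inn}}_X A|/|A|$ over nonempty finite $A\subseteq I$, and $\mathrm{F\o l}$, $\mathrm{F\o l}^{\mathrm{inn}}$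 are the infima of these over all finite generating sets $X$. *)

theory Defs
  imports Complex_Main
begin

text \<open>The fusion algebra R(SU_q(2)): irreducibles are the naturals, unit 0,
trivial involution.  All fusion coefficients are 0 or 1, so only supports matter.\<close>

definition qnum :: "real \<Rightarrow> real \<Rightarrow> real" where
  "qnum q x = (if q = 1 then x else (q powr (-x) - q powr x) / (q powr (-1) - q))"

definition dimq :: "real \<Rightarrow> nat \<Rightarrow> real" where
  "dimq q n = qnum q (real n + 1)"

definition supp_mult :: "nat \<Rightarrow> nat \<Rightarrow> nat set" where
  "supp_mult m n = {k. (if m \<le> n then n - m else m - n) \<le> k \<and> k \<le> m + n \<and> even (m + n + k)}"

text \<open>Support of the product of a finite list of irreducibles (empty product = unit 0).
Since all coefficients are nonnegative, the support of a product is the union of supports.\<close>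
fun supp_prod :: "nat list \<Rightarrow> nat set" where
  "supp_prod [] = {0}"
| "supp_prod (x # xs) = (\<Union>k\<in>supp_prod xs. supp_mult k x)"

definition gen_set :: "nat set \<Rightarrow> bool" where
  "gen_set X \<longleftrightarrow> finite X \<and> (\<forall>n. \<exists>xs. set xs \<subseteq> X \<and> n \<in> supp_prod xs)"

definition wsize :: "real \<Rightarrow> nat set \<Rightarrow> real" where
  "wsize q A = (\<Sum>b\<in>A. (dimq q b)^2)"

definition inner_bdry :: "nat set \<Rightarrow> nat set \<Rightarrow> nat set" where
  "inner_bdry X A = {b \<in> A. \<exists>x\<in>X. \<not> supp_mult b x \<subseteq> A}"

definition bdry :: "nat set \<Rightarrow> nat set \<Rightarrow> nat set" where
  "bdry X A = inner_bdry X A \<union> {b \<in> - A. \<exists>x\<in>X. \<not> supp_mult b x \<subseteq> - A}"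

definition Fol_X :: "real \<Rightarrow> nat set \<Rightarrow> real" where
  "Fol_X q X = Inf {wsize q (bdry X A) / wsize q A | A. finite A \<and> A \<noteq> {}}"

definition Fol_inn_X :: "real \<Rightarrow> nat set \<Rightarrow> real" where
  "Fol_inn_X q X = Inf {wsize q (inner_bdry X A) / wsize q A | A. finite A \<and> A \<noteq> {}}"

definition Fol :: "real \<Rightarrow> real" where
  "Fol q = Inf {Fol_X q X | X. gen_set X}"

definition Fol_inn :: "real \<Rightarrow> real" where
  "Fol_inn q = Inf {Fol_inn_X q X | X. gen_set X}"

end

theory Submission
  imports Defs
begin

definition PP :: "real \<Rightarrow> nat \<Rightarrow> real" where "PP q n = (\<Sum>j\<le>n. q^(2*j))"

lemma PP_Suc: "PP q (Suc n) = PP q n + q^(2*n+2)"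
  by (simp add: PP_def)

lemma PP_pos: "0 < q \<Longrightarrow> 0 < PP q n"
  by (induction n) (auto simp: PP_Suc PP_def intro: add_pos_pos)

lemma PP_le: "0 < q \<Longrightarrow> q \<le> 1 \<Longrightarrow> PP q n \<le> real n + 1"
proof (induction n)
  case 0 then show ?case by (simp add: PP_def)
next
  case (Suc n)
  have "q^(2*n+2) \<le> 1" using Suc.prems power_le_one[of q "2*n+2"] by simp
  then show ?case using Suc by (simp only: PP_Suc) simp
qed

lemma dimq_eq:
  assumes "0 < q" "q \<le> 1"
  shows "dimq q n = PP q n / q^n"
proof (cases "q = 1")
  case True then show ?thesis by (simp add: dimq_def qnum_def PP_def)
next
  case False
  then have q1: "q < 1" using assms by simp
  have a: "q powr (real n + 1) = q^(Suc n)" using powr_realpow[of q "Suc n"] assms by (simp add: add.commute)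
  have b: "q powr (-(real n + 1)) = 1 / q^(Suc n)" using a assms powr_minus[of q "real n + 1"] by (simp add: divide_inverse)
  have c: "q powr (-1) = 1 / q" using assms by (simp add: powr_minus_divide)
  have q2: "q^2 < 1" using q1 assms by (simp add: power_less_one_iff)
  have g: "PP q n = (1 - (q^2)^(Suc n)) / (1 - q^2)"
  proof -
    have "PP q n = (\<Sum>j<Suc n. (q^2)^j)" unfolding PP_def
      by (simp add: lessThan_Suc_atMost power_mult)
    also have "\<dots> = (1 - (q^2)^(Suc n)) / (1 - q^2)"
      using q2 by (subst sum_gp_strict) auto
    finally show ?thesis .
  qed
  have "dimq q n = (q powr (-(real n + 1)) - q powr (real n + 1)) / (q powr (-1) - q)"
    using False by (simp add: dimq_def qnum_def)
  also have "\<dots> = (1 / q^(Suc n) - q^(Suc n)) / (1/q - q)"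
    by (simp only: a b c)
  also have "\<dots> = (1 - (q^2)^(Suc n)) / ((1 - q^2) * q^n)"
  proof -
    have e: "(q^2)^(Suc n) = (q^(Suc n))^2" by (simp only: power_mult[symmetric] mult.commute)
    have gen: "\<And>u t. 0 < t \<Longrightarrow> u = q * t \<Longrightarrow> (1/u - u)/(1/q - q) = (1 - u^2)/((1-q^2)*t)"
      using assms q2 by (auto simp: field_simps power2_eq_square)
    show ?thesis unfolding e by (rule gen) (use assms in auto)
  qed
  finally show ?thesis by (simp add: g)
qed


context
  fixes q :: real
  assumes q0: "0 < q" and q1: "q \<le> 1"
begin

lemma d_pos: "0 < dimq q n"
  using dimq_eq[OF q0 q1] PP_pos[OF q0] q0 by simp

lemma d_rec: "q * dimq q (Suc n) = dimq q n + q^(n+2)"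
proof -
  have "q * dimq q (Suc n) = (PP q n + q^(2*n+2)) / q^n"
    using q0 by (simp add: dimq_eq[OF q0 q1] PP_Suc)
  also have "\<dots> = dimq q n + q^(2*n+2) / q^n" by (simp add: dimq_eq[OF q0 q1] add_divide_distrib)
  also have "q^(2*n+2) / q^n = q^(n+2)"
  proof -
    have "q^(2*n+2) = q^((n+2)+n)" by (rule arg_cong[where f="power q"]) simp
    also have "\<dots> = q^(n+2) * q^n" by (rule power_add)
    finally show ?thesis using q0 by simp
  qed
  finally show ?thesis .
qed

lemma d_le_Suc: "dimq q n \<le> dimq q (Suc n)"
proof -
  have "dimq q n \<le> q * dimq q (Suc n)" using d_rec[of n] q0 by simp
  also have "\<dots> \<le> dimq q (Suc n)" using q1 d_pos[of "Suc n"] by (simp add: mult_left_le_one_le)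
  finally show ?thesis .
qed

lemma d_mono: "m \<le> k \<Longrightarrow> dimq q m \<le> dimq q k"
  using lift_Suc_mono_le[of "dimq q", OF d_le_Suc] by blast

lemma d_qle: "q * dimq q n \<le> q * dimq q (Suc n)"
  using d_le_Suc q0 by simp

lemma d_le_q: "dimq q n \<le> q * dimq q (Suc n)"
  using d_rec[of n] q0 by simp

lemma qn_d: "q^n * dimq q n \<le> real n + 1"
  using dimq_eq[OF q0 q1] PP_le[OF q0 q1] q0 by simp

lemma d_ge: "real n + 1 \<le> dimq q n"
proof (induction n)
  case 0 then show ?case by (simp add: dimq_eq[OF q0 q1] PP_def)
next
  case (Suc n)
  have bern: "1 - q^(Suc n) \<le> (real n + 1) * (1 - q)"
    using Bernoulli_inequality[of "q - 1" "Suc n"] q0 by (simp add: algebra_simps)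
  have p: "q^(Suc n) \<le> 1" using q0 q1 power_le_one[of q "Suc n"] by simp
  have "q * (1 - q^(Suc n)) \<le> 1 - q^(Suc n)" using p q1 q0 by (simp add: mult_left_le_one_le)
  with bern have key: "q * (real n + 2) \<le> real n + 1 + q^(n+2)"
    by (simp add: algebra_simps)
  have k2: "q*(real n + 2) \<le> dimq q n + q^(n+2)" using key Suc.IH by linarith
  have "q * (real (Suc n) + 1) \<le> q * dimq q (Suc n)"
    using k2 d_rec[of n] by (simp add: add.commute)
  then show ?case using q0 by simp
qed

definition SS :: "nat \<Rightarrow> real" where "SS n = (\<Sum>k\<le>n. (dimq q k)^2)"

lemma SS_Suc: "SS (Suc n) = SS n + (dimq q (Suc n))^2" by (simp add: SS_def)

lemma SS_pos: "0 < SS n"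
  unfolding SS_def by (rule sum_pos) (auto simp: d_pos[THEN less_imp_neq, symmetric])

lemma I1: "(1 - q^2) * SS n \<le> (dimq q n)^2"
proof (induction n)
  case 0 then show ?case using q0 by (simp add: SS_def dimq_eq[OF q0 q1] PP_def)
next
  case (Suc n)
  have "(dimq q n)^2 \<le> (q * dimq q (Suc n))^2"
    using d_le_q[of n] d_pos[of n] by (simp add: power_mono)
  then show ?case using Suc.IH by (simp add: SS_Suc algebra_simps power_mult_distrib)
qed

lemma I2: "(1 / q^2 - q^2) * SS n \<le> (dimq q n)^2 + (dimq q (Suc n))^2"
proof -
  have "(dimq q n)^2 \<le> q^2 * (dimq q (Suc n))^2"
    using d_le_q[of n] d_pos[of n] by (simp add: power_mono flip: power_mult_distrib)
  with I1[of n] have "(1 - q^2) * SS n \<le> q^2 * (dimq q (Suc n))^2" by simp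
  then have "(1 - q^2) * SS n / q^2 \<le> (dimq q (Suc n))^2" using q0 by (simp add: field_simps)
  moreover have "(1 / q^2 - q^2) * SS n = (1 - q^2) * SS n + (1 - q^2) * SS n / q^2"
    using q0 by (simp add: field_simps)
  ultimately show ?thesis using I1[of n] by simp
qed

lemma E_bound: "(dimq q n)^2 - (1 - q^2) * SS n \<le> 2 * (real n + 1)^2"
proof (induction n)
  case 0
  have "q^2 \<le> 1" using q0 q1 power_le_one[of q 2] by simp
  then show ?case using q0 by (simp add: SS_def dimq_eq[OF q0 q1] PP_def)
next
  case (Suc n)
  have eq: "q^2 * (dimq q (Suc n))^2 - (dimq q n)^2 = q^(n+2) * (q * dimq q (Suc n) + dimq q n)"
  proof -
    have gen: "\<And>a b t. q*b = a+t \<Longrightarrow> q^2*b^2 - a^2 = t*(q*b+a)"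
    proof -
      fix a b t :: real assume h: "q*b = a+t"
      have "q^2*b^2 - a^2 = (q*b)^2 - a^2" by (simp add: power_mult_distrib)
      also have "\<dots> = (a+t)^2 - a^2" by (simp only: h)
      also have "\<dots> = t*((a+t)+a)" by (simp add: power2_eq_square algebra_simps)
      also have "\<dots> = t*(q*b+a)" by (simp only: h)
      finally show "q^2*b^2 - a^2 = t*(q*b+a)" .
    qed
    show ?thesis by (rule gen) (rule d_rec)
  qed
  have b1: "q * dimq q (Suc n) + dimq q n \<le> 2 * dimq q (Suc n)"
    using q1 d_le_Suc[of n] d_pos[of "Suc n"] mult_left_le_one_le[of "dimq q (Suc n)" q] q0 by linarith
  have b2: "q^(n+2) * (2 * dimq q (Suc n)) = 2 * q * (q^(Suc n) * dimq q (Suc n))"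
    by simp
  have b3: "q^(Suc n) * dimq q (Suc n) \<le> real n + 2" using qn_d[of "Suc n"] by simp
  have "q^(n+2) * (q * dimq q (Suc n) + dimq q n) \<le> q^(n+2) * (2 * dimq q (Suc n))"
    using b1 q0 by (simp add: mult_left_mono)
  also have "\<dots> \<le> 2 * (real n + 2)"
  proof -
    have "0 \<le> q^(Suc n) * dimq q (Suc n)" using q0 d_pos[of "Suc n"] by simp
    then have "q * (q^(Suc n) * dimq q (Suc n)) \<le> 1 * (real n + 2)"
      using b3 q0 q1 by (intro mult_mono) auto
    then show ?thesis unfolding b2 by simp
  qed
  finally have inc: "q^2 * (dimq q (Suc n))^2 - (dimq q n)^2 \<le> 2 * (real n + 2)" using eq by simp
  have "(dimq q (Suc n))^2 - (1 - q^2) * SS (Suc n)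
      = ((dimq q n)^2 - (1 - q^2) * SS n) + (q^2 * (dimq q (Suc n))^2 - (dimq q n)^2)"
    by (simp add: SS_Suc algebra_simps)
  also have "\<dots> \<le> 2 * (real n + 1)^2 + 2 * (real n + 2)" using Suc.IH inc by simp
  also have "\<dots> \<le> 2 * (real (Suc n) + 1)^2" by (simp add: power2_eq_square algebra_simps)
  finally show ?case .
qed

lemma SS_ge: "(real n + 1)^3 / 3 \<le> SS n"
proof (induction n)
  case 0 then show ?case by (simp add: SS_def dimq_eq[OF q0 q1] PP_def)
next
  case (Suc n)
  have "(real n + 2)^2 \<le> (dimq q (Suc n))^2" using d_ge[of "Suc n"] by (simp add: power_mono)
  moreover have "(real (Suc n) + 1)^3 / 3 \<le> (real n + 1)^3 / 3 + (real n + 2)^2"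
    by (simp add: power2_eq_square power3_eq_cube field_simps)
  ultimately show ?case using Suc.IH by (simp add: SS_Suc)
qed

end


lemma supp_mult_0: "supp_mult k 0 = {k}"
  by (auto simp: supp_mult_def)

lemma supp_prod_0: "set xs \<subseteq> {0} \<Longrightarrow> supp_prod xs = {0}"
  by (induction xs) (auto simp: supp_mult_0)

lemma gen_set_nonzero: "gen_set X \<Longrightarrow> \<exists>x\<in>X. x \<noteq> 0"
proof (rule ccontr)
  assume g: "gen_set X" and "\<not> (\<exists>x\<in>X. x \<noteq> 0)"
  then have X0: "X \<subseteq> {0}" by auto
  from g obtain xs where "set xs \<subseteq> X" "1 \<in> supp_prod xs" unfolding gen_set_def by blast
  with X0 supp_prod_0[of xs] show False by auto
qed

lemma supp_prod_rep: "n \<in> supp_prod (replicate n 1)"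
proof (induction n)
  case 0 then show ?case by simp
next
  case (Suc n)
  have "Suc n \<in> supp_mult n 1" by (auto simp: supp_mult_def)
  with Suc show ?case by auto
qed

lemma gen_set_1: "gen_set {1}"
  unfolding gen_set_def using supp_prod_rep by (metis finite.emptyI finite.insertI set_replicate_Suc subsetI set_replicate_conv_if empty_subsetI)

lemma mem1: "m + x \<in> supp_mult m x"
  by (auto simp: supp_mult_def)

lemma mem2: "m \<in> supp_mult (m + x) x"
  by (auto simp: supp_mult_def)

lemma wsize_nonneg: "0 \<le> wsize q A"
  unfolding wsize_def by (intro sum_nonneg) auto

lemma wsize_mono: "finite B \<Longrightarrow> A \<subseteq> B \<Longrightarrow> wsize q A \<le> wsize q B"
  unfolding wsize_def by (intro sum_mono2) auto

lemma wsize_atMost: "0 < q \<Longrightarrow> q \<le> 1 \<Longrightarrow> wsize q {..n} = SS q n"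
  by (simp add: wsize_def SS_def)

lemma inner_fin: "finite A \<Longrightarrow> finite (inner_bdry X A)"
  unfolding inner_bdry_def by auto

lemma bdry_sub: "finite A \<Longrightarrow> finite X \<Longrightarrow> A \<noteq> {} \<Longrightarrow> bdry X A \<subseteq> {..Max A + Max X}"
proof
  fix b assume fA: "finite A" and fX: "finite X" and ne: "A \<noteq> {}" and b: "b \<in> bdry X A"
  show "b \<in> {..Max A + Max X}"
  proof (cases "b \<in> A")
    case True then show ?thesis using fA by (simp add: trans_le_add1)
  next
    case False
    with b obtain x k where x: "x \<in> X" and k: "k \<in> supp_mult b x" "k \<in> A"
      unfolding bdry_def inner_bdry_def by auto
    have "b \<le> k + x" using k(1) by (auto simp: supp_mult_def split: if_splits)
    moreover have "k \<le> Max A" using k fA by simp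
    moreover have "x \<le> Max X" using x fX by simp
    ultimately show ?thesis by simp
  qed
qed

lemma ratio_inn_lower:
  assumes q0: "0 < q" and q1: "q \<le> 1" and fA: "finite A" and ne: "A \<noteq> {}" and x: "x \<in> X" "x \<noteq> 0"
  shows "1 - q^2 \<le> wsize q (inner_bdry X A) / wsize q A"
proof -
  define m where "m = Max A"
  have mA: "m \<in> A" using fA ne by (simp add: m_def)
  have "m + x \<notin> A" using x fA m_def by (metis Max_ge add_le_same_cancel1 le_zero_eq)
  then have mi: "m \<in> inner_bdry X A" using mA x mem1[of m x] unfolding inner_bdry_def by blast
  have "(dimq q m)^2 = wsize q {m}" by (simp add: wsize_def)
  also have "\<dots> \<le> wsize q (inner_bdry X A)" using mi inner_fin[OF fA] by (intro wsize_mono) auto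
  finally have w1: "(dimq q m)^2 \<le> wsize q (inner_bdry X A)" .
  have As: "A \<subseteq> {..m}" using fA m_def by auto
  have w2: "wsize q A \<le> SS q m" using wsize_mono[OF _ As, of q] wsize_atMost[OF q0 q1, of m] by simp
  have wpos: "0 < wsize q A"
  proof -
    have "0 < wsize q {m}" using d_pos[OF q0 q1, of m] by (simp add: wsize_def)
    also have "\<dots> \<le> wsize q A" using mA fA by (intro wsize_mono) auto
    finally show ?thesis .
  qed
  have qq: "0 \<le> 1 - q^2" using q0 q1 power_le_one[of q 2] by simp
  have "(1 - q^2) * wsize q A \<le> (1 - q^2) * SS q m" using w2 qq by (rule mult_left_mono)
  also have "\<dots> \<le> (dimq q m)^2" using I1[OF q0 q1] .
  also have "\<dots> \<le> wsize q (inner_bdry X A)" using w1 .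
  finally show ?thesis using wpos by (simp add: le_divide_eq)
qed

lemma ratio_lower:
  assumes q0: "0 < q" and q1: "q \<le> 1" and fA: "finite A" and ne: "A \<noteq> {}" and fX: "finite X"
    and x: "x \<in> X" "x \<noteq> 0"
  shows "1 / q^2 - q^2 \<le> wsize q (bdry X A) / wsize q A"
proof -
  define m where "m = Max A"
  have mA: "m \<in> A" using fA ne by (simp add: m_def)
  have mx: "m + x \<notin> A" using x fA m_def by (metis Max_ge add_le_same_cancel1 le_zero_eq)
  then have mi: "m \<in> bdry X A" using mA x mem1[of m x] unfolding bdry_def inner_bdry_def by blast
  have mo: "m + x \<in> bdry X A" using mx mA x mem2[of m x] unfolding bdry_def by blast
  have fb: "finite (bdry X A)" using bdry_sub[OF fA fX ne] finite_subset by blast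
  have "x \<noteq> 0" using x by simp
  then have ne2: "m \<noteq> m + x" by simp
  have "(dimq q m)^2 + (dimq q (Suc m))^2 \<le> (dimq q m)^2 + (dimq q (m + x))^2"
    using d_mono[OF q0 q1, of "Suc m" "m + x"] x d_pos[OF q0 q1, of "Suc m"] by (simp add: power_mono)
  also have "\<dots> = wsize q {m, m + x}" using ne2 by (simp add: wsize_def)
  also have "\<dots> \<le> wsize q (bdry X A)" using mi mo fb by (intro wsize_mono) auto
  finally have w1: "(dimq q m)^2 + (dimq q (Suc m))^2 \<le> wsize q (bdry X A)" .
  have As: "A \<subseteq> {..m}" using fA m_def by auto
  have w2: "wsize q A \<le> SS q m" using wsize_mono[OF _ As, of q] wsize_atMost[OF q0 q1, of m] by simp
  have wpos: "0 < wsize q A"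
  proof -
    have "0 < wsize q {m}" using d_pos[OF q0 q1, of m] by (simp add: wsize_def)
    also have "\<dots> \<le> wsize q A" using mA fA by (intro wsize_mono) auto
    finally show ?thesis .
  qed
  have q2: "q^2 \<le> 1" using q0 q1 power_le_one[of q 2] by simp
  have qq: "0 \<le> 1 / q^2 - q^2"
  proof -
    have "q^2 \<le> 1 / q^2" using q2 q0 by (simp add: field_simps) (use power_le_one[of q 4] q1 in simp)
    then show ?thesis by simp
  qed
  have "(1 / q^2 - q^2) * wsize q A \<le> (1 / q^2 - q^2) * SS q m" using w2 qq by (rule mult_left_mono)
  also have "\<dots> \<le> (dimq q m)^2 + (dimq q (Suc m))^2" using I2[OF q0 q1] .
  also have "\<dots> \<le> wsize q (bdry X A)" using w1 .
  finally show ?thesis using wpos by (simp add: le_divide_eq)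
qed


lemma inf_le_eps:
  fixes S :: "real set"
  assumes r: "\<And>n. r n \<le> a + C / (real n + 1)" and C: "0 \<le> C" and rS: "\<And>n. r n \<in> S"
    and bdd: "bdd_below S"
  shows "Inf S \<le> a"
proof (rule field_le_epsilon)
  fix e :: real assume e: "0 < e"
  obtain n where n: "C / e < real n" using reals_Archimedean2 by blast
  have "C < e * real n" using n e by (simp add: field_simps)
  then have "C \<le> e * (real n + 1)" using e by (simp add: algebra_simps)
  then have "C / (real n + 1) \<le> e" by (simp add: field_simps)
  have "Inf S \<le> r n" using rS bdd by (rule cInf_lower)
  also have "\<dots> \<le> a + C / (real n + 1)" by (rule r)
  also have "\<dots> \<le> a + e" using \<open>C / (real n + 1) \<le> e\<close> by simp
  finally show "Inf S \<le> a + e" .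
qed

lemma inner_1: "inner_bdry {1} {..n} \<subseteq> {n}"
proof
  fix b assume b: "b \<in> inner_bdry {1} {..n}"
  then have bn: "b \<le> n" and ns: "\<not> supp_mult b 1 \<subseteq> {..n}" unfolding inner_bdry_def by auto
  show "b \<in> {n}"
  proof (rule ccontr)
    assume "b \<notin> {n}"
    then have "b < n" using bn by simp
    then have "supp_mult b 1 \<subseteq> {..n}" by (auto simp: supp_mult_def)
    with ns show False by simp
  qed
qed

lemma bdry_1: "bdry {1} {..n} \<subseteq> {n, Suc n}"
proof
  fix b assume b: "b \<in> bdry {1} {..n}"
  show "b \<in> {n, Suc n}"
  proof (cases "b \<le> n")
    case True
    then have "b \<in> inner_bdry {1} {..n}" using b unfolding bdry_def by auto
    then show ?thesis using inner_1 by auto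
  next
    case False
    with b have "\<not> supp_mult b 1 \<subseteq> - {..n}" unfolding bdry_def inner_bdry_def by auto
    then obtain k where "k \<in> supp_mult b 1" "k \<le> n" by (auto simp: subset_iff not_less)
    then have "b \<le> Suc n" by (auto simp: supp_mult_def split: if_splits)
    then show ?thesis using False by auto
  qed
qed

context
  fixes q :: real
  assumes q0: "0 < q" and q1: "q \<le> 1"
begin

lemma inn_upper_n:
  "wsize q (inner_bdry {1} {..n}) / wsize q {..n} \<le> (1 - q^2) + 6 / (real n + 1)"
proof -
  have S: "wsize q {..n} = SS q n" by (rule wsize_atMost[OF q0 q1])
  have Sp: "0 < SS q n" by (rule SS_pos[OF q0 q1])
  have "wsize q (inner_bdry {1} {..n}) \<le> wsize q {n}" using inner_1 by (intro wsize_mono) auto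
  also have "\<dots> = (dimq q n)^2" by (simp add: wsize_def)
  also have "\<dots> \<le> (1 - q^2) * SS q n + 2 * (real n + 1)^2" using E_bound[OF q0 q1, of n] by simp
  also have "2 * (real n + 1)^2 \<le> 6 / (real n + 1) * SS q n"
  proof -
    have "2 * (real n + 1)^2 = 6 / (real n + 1) * ((real n + 1)^3 / 3)"
      by (simp add: field_simps power2_eq_square power3_eq_cube)
    also have "\<dots> \<le> 6 / (real n + 1) * SS q n" using SS_ge[OF q0 q1, of n]
      by (intro mult_left_mono) auto
    finally show ?thesis .
  qed
  finally have "wsize q (inner_bdry {1} {..n}) \<le> ((1 - q^2) + 6 / (real n + 1)) * SS q n"
    by (simp add: algebra_simps)
  then show ?thesis using S Sp by (simp add: divide_le_eq)
qed

lemma full_upper_n: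
  "wsize q (bdry {1} {..n}) / wsize q {..n} \<le> (1 / q^2 - q^2) + (6 + 24 / q^2) / (real n + 1)"
proof -
  have S: "wsize q {..n} = SS q n" by (rule wsize_atMost[OF q0 q1])
  have Sp: "0 < SS q n" by (rule SS_pos[OF q0 q1])
  have "wsize q (bdry {1} {..n}) \<le> wsize q {n, Suc n}" using bdry_1 by (intro wsize_mono) auto
  also have "\<dots> = (dimq q n)^2 + (dimq q (Suc n))^2" by (simp add: wsize_def)
  finally have w: "wsize q (bdry {1} {..n}) \<le> (dimq q n)^2 + (dimq q (Suc n))^2" .
  define En where "En = (dimq q n)^2 - (1 - q^2) * SS q n"
  define En1 where "En1 = (dimq q (Suc n))^2 - (1 - q^2) * SS q (Suc n)"
  have e1: "En \<le> 2 * (real n + 1)^2" unfolding En_def by (rule E_bound[OF q0 q1])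
  have e2: "En1 \<le> 8 * (real n + 1)^2"
  proof -
    have "En1 \<le> 2 * (real (Suc n) + 1)^2" unfolding En1_def by (rule E_bound[OF q0 q1])
    also have "\<dots> \<le> 8 * (real n + 1)^2" by (simp add: power2_eq_square algebra_simps)
    finally show ?thesis .
  qed
  have id: "(dimq q n)^2 + (dimq q (Suc n))^2 = (1 / q^2 - q^2) * SS q n + En + En1 / q^2"
    unfolding En_def En1_def using q0 by (simp add: SS_Suc[OF q0 q1] field_simps)
  have "En1 / q^2 \<le> 8 / q^2 * (real n + 1)^2" using e2 q0 by (simp add: divide_right_mono)
  with e1 have ex: "En + En1 / q^2 \<le> (2 + 8 / q^2) * (real n + 1)^2" by (simp add: algebra_simps)
  have gen: "\<And>c t::real. 0 < c \<Longrightarrow> 0 < t \<Longrightarrow> (2 + 8 / c) * t^2 = (6 + 24 / c) / t * (t^3 / 3)"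
    by (simp add: field_simps power2_eq_square power3_eq_cube)
  have "(2 + 8 / q^2) * (real n + 1)^2 = (6 + 24 / q^2) / (real n + 1) * ((real n + 1)^3 / 3)"
    using q0 by (intro gen) auto
  also have "\<dots> \<le> (6 + 24 / q^2) / (real n + 1) * SS q n" using SS_ge[OF q0 q1, of n] q0
    by (intro mult_left_mono) auto
  finally have "wsize q (bdry {1} {..n}) \<le> ((1 / q^2 - q^2) + (6 + 24 / q^2) / (real n + 1)) * SS q n"
    using w id ex by (simp add: algebra_simps)
  then show ?thesis using S Sp by (simp add: divide_le_eq)
qed

end


lemma Fol_final:
  fixes q :: real
  assumes q0: "0 < q" and q1: "q \<le> 1"
  shows "Fol_inn q = 1 - q^2 \<and> Fol q = 1 / q^2 - q^2"
proof -
  define RI where "RI X = {wsize q (inner_bdry X A) / wsize q A | A. finite A \<and> A \<noteq> {}}" for X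
  define RF where "RF X = {wsize q (bdry X A) / wsize q A | A. finite A \<and> A \<noteq> {}}" for X
  have RIne: "RI X \<noteq> {}" for X unfolding RI_def by (auto intro!: exI[of _ "{0::nat}"])
  have RFne: "RF X \<noteq> {}" for X unfolding RF_def by (auto intro!: exI[of _ "{0::nat}"])
  have RIb: "bdd_below (RI X)" for X unfolding RI_def bdd_below_def
    by (rule exI[of _ 0]) (auto intro: divide_nonneg_nonneg wsize_nonneg)
  have RFb: "bdd_below (RF X)" for X unfolding RF_def bdd_below_def
    by (rule exI[of _ 0]) (auto intro: divide_nonneg_nonneg wsize_nonneg)
  have FI: "Fol_inn_X q X = Inf (RI X)" for X by (simp add: Fol_inn_X_def RI_def)
  have FF: "Fol_X q X = Inf (RF X)" for X by (simp add: Fol_X_def RF_def)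
  have lowI: "1 - q^2 \<le> Fol_inn_X q X" if g: "gen_set X" for X
  proof -
    obtain x where x: "x \<in> X" "x \<noteq> 0" using gen_set_nonzero[OF g] by blast
    show ?thesis unfolding FI
      by (rule cInf_greatest[OF RIne]) (auto simp: RI_def intro!: ratio_inn_lower[OF q0 q1 _ _ x])
  qed
  have lowF: "1 / q^2 - q^2 \<le> Fol_X q X" if g: "gen_set X" for X
  proof -
    obtain x where x: "x \<in> X" "x \<noteq> 0" using gen_set_nonzero[OF g] by blast
    have fX: "finite X" using g by (simp add: gen_set_def)
    show ?thesis unfolding FF
      by (rule cInf_greatest[OF RFne]) (auto simp: RF_def intro!: ratio_lower[OF q0 q1 _ _ fX x])
  qed
  have upI: "Fol_inn_X q {1} \<le> 1 - q^2" unfolding FI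
    by (rule inf_le_eps[where r="\<lambda>n. wsize q (inner_bdry {1} {..n}) / wsize q {..n}" and C=6])
       (rule inn_upper_n[OF q0 q1], simp, force simp: RI_def, rule RIb)
  have upF: "Fol_X q {1} \<le> 1 / q^2 - q^2" unfolding FF
    by (rule inf_le_eps[where r="\<lambda>n. wsize q (bdry {1} {..n}) / wsize q {..n}" and C="6 + 24 / q^2"])
       (rule full_upper_n[OF q0 q1], use q0 in simp, force simp: RF_def, rule RFb)
  have neI: "{Fol_inn_X q X | X. gen_set X} \<noteq> {}" using gen_set_1 by auto
  have neF: "{Fol_X q X | X. gen_set X} \<noteq> {}" using gen_set_1 by auto
  have bI: "bdd_below {Fol_inn_X q X | X. gen_set X}" unfolding bdd_below_def using lowI by blast
  have bF: "bdd_below {Fol_X q X | X. gen_set X}" unfolding bdd_below_def using lowF by blast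
  have "Fol_inn q \<le> Fol_inn_X q {1}" unfolding Fol_inn_def
    by (rule cInf_lower[OF _ bI]) (use gen_set_1 in blast)
  moreover have "1 - q^2 \<le> Fol_inn q" unfolding Fol_inn_def
    by (rule cInf_greatest[OF neI]) (use lowI in blast)
  moreover have "Fol q \<le> Fol_X q {1}" unfolding Fol_def
    by (rule cInf_lower[OF _ bF]) (use gen_set_1 in blast)
  moreover have "1 / q^2 - q^2 \<le> Fol q" unfolding Fol_def
    by (rule cInf_greatest[OF neF]) (use lowF in blast)
  ultimately show ?thesis using upI upF by linarith
qed

theorem proposition4p4:
  fixes q :: real
  assumes "0 < q" and "q \<le> 1"
  shows "Fol_inn q = 1 - q^2 \<and> Fol q = 1 / q^2 - q^2"
  using Fol_final[OF assms] .

end
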